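(* Let $(\mathbb{P},\le,f)$ be a forcing property for $\mathcal{L}_A$, $G$ a generic set and $\varphi\in\mathcal{L}_A^s(C)$. Then $\varphi^G=\inf_{p\in G}F^w_p(\varphi)$.
   Context: $\mathcal{L}$ is a countable continuous signature; formulas of $\mathcal{L}_{\omega_1,\omega}$ are built from atomic formulas using $\neg$, $\tfrac12$, $\dotplus$, countable conjunctions $\bigwedge$ and $\inf_x$. $\mathcal{L}_A$ is a countable fragment, $C=\{c_i:i<\omega\}$ new constants, $\mathcal{L}_A(C)$ the smallest countable fragment of $\mathcal{L}_{\omega_1,\omega}(C)$ containing $\mathcal{L}_A$, $\mathcal{L}_A^s(C)$ its sentences, $\mathcal{L}_A^{as}(C)$ its atomic sentences, $\mathcal{T}(C)$ closed terms. A forcing property $(\mathbb{P},\le,f)$: poset with $f_p\colon\mathcal{L}_A^{as}(C)\to[0,1]$ such that (1) $p\le q\Rightarrow f_p\le f_q$; (2) for every $p$, $\varepsilon>0$, $\tau,\sigma\in\mathcal{T}(C)$, atomic $\varphi(x)$ there are $q\le p$, $c\in C$ with $f_q(d(\tau,c))<\varepsilon$, $f_q(d(\tau,\sigma))<f_p(d(\sigma,\tau))+\varepsilon$, and if $f_p(d(\tau,\sigma))<\delta_{\varphi,x}(\varepsilon)$ then $f_q(\varphi(\sigma))<f_p(\varphi(\tau))+\varepsilon$. $F_p$: $f_p$ on atomics; $F_p(\neg\varphi)=1-\inf_{q\le p}F_q(\varphi)$; $F_p(\tfrac12\varphi)=\tfrac12F_p(\varphi)$; $F_p(\varphi\dotplus\psi)=\min(F_p(\varphi)+F_p(\psi),1)$;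 $F_p(\bigwedge\Phi)=\inf_{\varphi\in\Phi}F_p(\varphi)$; $F_p(\inf_x\varphi)=\inf_{c\in C}F_p(\varphi(c))$. Weak forcing: $F^w_p(\varphi)=\sup_{q\le p}\inf_{q'\le q}F_{q'}(\varphi)$. $G\subseteq\mathbb{P}$ is generic if nonempty, downward directed, upward closed, and for every sentence $\varphi$ and $r>1$ some $p\in G$ has $F_p(\varphi)+F_p(\neg\varphi)<r$. $\varphi^G:=\inf_{p\in G}F_p(\varphi)$. *)

theory Defs
  imports Complex_Main "HOL-Library.Countable_Set"
begin

text \<open>Terms: variables, the new constants c_i (CC i), and function symbols of the
signature applied to argument lists (constants of the signature are 0-ary symbols).\<close>
datatype 'f trm = Var nat | CC nat | Fn 'f "'f trm list"

text \<open>Formulas: atomic (relation symbols and the metric d), negation, 1/2, truncated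
sum, countable conjunction (indexed by nat), and inf over a variable.\<close>
datatype ('f, 'r) fm =
    Rel 'r "'f trm list"
  | Dist "'f trm" "'f trm"
  | Neg "('f, 'r) fm"
  | Half "('f, 'r) fm"
  | Plus "('f, 'r) fm" "('f, 'r) fm"
  | Conj "nat \<Rightarrow> ('f, 'r) fm"
  | Inf_q nat "('f, 'r) fm"

fun tfv :: "'f trm \<Rightarrow> nat set" where
  "tfv (Var v) = {v}"
| "tfv (CC i) = {}"
| "tfv (Fn g ts) = (\<Union>t\<in>set ts. tfv t)"

fun tsubst :: "(nat \<Rightarrow> 'f trm) \<Rightarrow> 'f trm \<Rightarrow> 'f trm" where
  "tsubst s (Var v) = s v"
| "tsubst s (CC i) = CC i"
| "tsubst s (Fn g ts) = Fn g (map (tsubst s) ts)"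

text \<open>Well-formed terms; the flag says whether the new constants C may occur.\<close>
fun twf :: "('f \<Rightarrow> nat) \<Rightarrow> bool \<Rightarrow> 'f trm \<Rightarrow> bool" where
  "twf ar b (Var v) = True"
| "twf ar b (CC i) = b"
| "twf ar b (Fn g ts) = (length ts = ar g \<and> (\<forall>t\<in>set ts. twf ar b t))"

primrec ffv :: "('f, 'r) fm \<Rightarrow> nat set" where
  "ffv (Rel r ts) = (\<Union>t\<in>set ts. tfv t)"
| "ffv (Dist a b) = tfv a \<union> tfv b"
| "ffv (Neg \<phi>) = ffv \<phi>"
| "ffv (Half \<phi>) = ffv \<phi>"
| "ffv (Plus \<phi> \<psi>) = ffv \<phi> \<union> ffv \<psi>"
| "ffv (Conj \<Phi>) = (\<Union>n. ffv (\<Phi> n))"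
| "ffv (Inf_q x \<phi>) = ffv \<phi> - {x}"

primrec fbv :: "('f, 'r) fm \<Rightarrow> nat set" where
  "fbv (Rel r ts) = {}"
| "fbv (Dist a b) = {}"
| "fbv (Neg \<phi>) = fbv \<phi>"
| "fbv (Half \<phi>) = fbv \<phi>"
| "fbv (Plus \<phi> \<psi>) = fbv \<phi> \<union> fbv \<psi>"
| "fbv (Conj \<Phi>) = (\<Union>n. fbv (\<Phi> n))"
| "fbv (Inf_q x \<phi>) = insert x (fbv \<phi>)"

primrec fsubst :: "(nat \<Rightarrow> 'f trm) \<Rightarrow> ('f, 'r) fm \<Rightarrow> ('f, 'r) fm" where
  "fsubst s (Rel r ts) = Rel r (map (tsubst s) ts)"
| "fsubst s (Dist a b) = Dist (tsubst s a) (tsubst s b)"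
| "fsubst s (Neg \<phi>) = Neg (fsubst s \<phi>)"
| "fsubst s (Half \<phi>) = Half (fsubst s \<phi>)"
| "fsubst s (Plus \<phi> \<psi>) = Plus (fsubst s \<phi>) (fsubst s \<psi>)"
| "fsubst s (Conj \<Phi>) = Conj (\<lambda>n. fsubst s (\<Phi> n))"
| "fsubst s (Inf_q x \<phi>) = Inf_q x (fsubst (s(x := Var x)) \<phi>)"

text \<open>Well-formed formulas of L_{omega_1,omega} (b = True: of L(C)); as usual in
L_{omega_1,omega}, every formula has only finitely many free variables.\<close>
primrec fwf :: "('f \<Rightarrow> nat) \<Rightarrow> ('r \<Rightarrow> nat) \<Rightarrow> bool \<Rightarrow> ('f, 'r) fm \<Rightarrow> bool" where
  "fwf far rar b (Rel r ts) = (length ts = rar r \<and> (\<forall>t\<in>set ts. twf far b t))"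
| "fwf far rar b (Dist s t) = (twf far b s \<and> twf far b t)"
| "fwf far rar b (Neg \<phi>) = fwf far rar b \<phi>"
| "fwf far rar b (Half \<phi>) = fwf far rar b \<phi>"
| "fwf far rar b (Plus \<phi> \<psi>) = (fwf far rar b \<phi> \<and> fwf far rar b \<psi>)"
| "fwf far rar b (Conj \<Phi>) = ((\<forall>n. fwf far rar b (\<Phi> n)) \<and> finite (\<Union>n. ffv (\<Phi> n)))"
| "fwf far rar b (Inf_q x \<phi>) = fwf far rar b \<phi>"

definition is_atomic :: "('f, 'r) fm \<Rightarrow> bool" where
  "is_atomic \<phi> \<longleftrightarrow> (\<exists>r ts. \<phi> = Rel r ts) \<or> (\<exists>s t. \<phi> = Dist s t)"

definition is_fragment :: "('f \<Rightarrow> nat) \<Rightarrow> ('r \<Rightarrow> nat) \<Rightarrow> bool \<Rightarrow> ('f, 'r) fm set \<Rightarrow> bool" where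
  "is_fragment far rar b S \<longleftrightarrow>
     S \<subseteq> {\<phi>. fwf far rar b \<phi>} \<and>
     (\<forall>\<phi>. fwf far rar b \<phi> \<and> is_atomic \<phi> \<longrightarrow> \<phi> \<in> S) \<and>
     (\<forall>\<phi>. Neg \<phi> \<in> S \<longrightarrow> \<phi> \<in> S) \<and>
     (\<forall>\<phi>. Half \<phi> \<in> S \<longrightarrow> \<phi> \<in> S) \<and>
     (\<forall>\<phi> \<psi>. Plus \<phi> \<psi> \<in> S \<longrightarrow> \<phi> \<in> S \<and> \<psi> \<in> S) \<and>
     (\<forall>\<Phi> n. Conj \<Phi> \<in> S \<longrightarrow> \<Phi> n \<in> S) \<and>
     (\<forall>x \<phi>. Inf_q x \<phi> \<in> S \<longrightarrow> \<phi> \<in> S) \<and>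
     (\<forall>\<phi>\<in>S. Neg \<phi> \<in> S \<and> Half \<phi> \<in> S \<and> (\<forall>x. Inf_q x \<phi> \<in> S)) \<and>
     (\<forall>\<phi>\<in>S. \<forall>\<psi>\<in>S. Plus \<phi> \<psi> \<in> S) \<and>
     (\<forall>\<phi>\<in>S. \<forall>x t. twf far b t \<and> tfv t \<inter> fbv \<phi> = {} \<longrightarrow> fsubst (Var(x := t)) \<phi> \<in> S)"

definition LAC :: "('f \<Rightarrow> nat) \<Rightarrow> ('r \<Rightarrow> nat) \<Rightarrow> ('f, 'r) fm set \<Rightarrow> ('f, 'r) fm set" where
  "LAC far rar LA = \<Inter>{S. is_fragment far rar True S \<and> countable S \<and> LA \<subseteq> S}"

definition LAs :: "('f \<Rightarrow> nat) \<Rightarrow> ('r \<Rightarrow> nat) \<Rightarrow> ('f, 'r) fm set \<Rightarrow> ('f, 'r) fm set" where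
  "LAs far rar LA = {\<phi> \<in> LAC far rar LA. ffv \<phi> = {}}"

definition LAas :: "('f \<Rightarrow> nat) \<Rightarrow> ('r \<Rightarrow> nat) \<Rightarrow> ('f, 'r) fm set \<Rightarrow> ('f, 'r) fm set" where
  "LAas far rar LA = {\<phi> \<in> LAs far rar LA. is_atomic \<phi>}"

definition closed_terms :: "('f \<Rightarrow> nat) \<Rightarrow> 'f trm set" where
  "closed_terms far = {t. twf far True t \<and> tfv t = {}}"

text \<open>delta \<phi> x is the modulus of uniform continuity delta_{\<phi>,x} of the atomic
formula \<phi> in the variable x (taken as a parameter).  The poset is the type 'p with
its order.\<close>
definition forcing_property ::
  "('f \<Rightarrow> nat) \<Rightarrow> ('r \<Rightarrow> nat) \<Rightarrow> (('f, 'r) fm \<Rightarrow> nat \<Rightarrow> real \<Rightarrow> real) \<Rightarrow> ('f, 'r) fm set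
    \<Rightarrow> ('p::order \<Rightarrow> ('f, 'r) fm \<Rightarrow> real) \<Rightarrow> bool" where
  "forcing_property far rar delta LA f \<longleftrightarrow>
     (\<forall>p. \<forall>\<phi>\<in>LAas far rar LA. 0 \<le> f p \<phi> \<and> f p \<phi> \<le> 1) \<and>
     (\<forall>p q. p \<le> q \<longrightarrow> (\<forall>\<phi>\<in>LAas far rar LA. f p \<phi> \<le> f q \<phi>)) \<and>
     (\<forall>p \<epsilon> \<tau> \<sigma> \<phi> x. \<epsilon> > 0 \<and> \<tau> \<in> closed_terms far \<and> \<sigma> \<in> closed_terms far \<and>
        fwf far rar True \<phi> \<and> is_atomic \<phi> \<and> ffv \<phi> \<subseteq> {x} \<longrightarrow>
        (\<exists>q c. q \<le> p \<and> f q (Dist \<tau> (CC c)) < \<epsilon> \<and>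
           f q (Dist \<tau> \<sigma>) < f p (Dist \<sigma> \<tau>) + \<epsilon> \<and>
           (f p (Dist \<tau> \<sigma>) < delta \<phi> x \<epsilon> \<longrightarrow>
              f q (fsubst (Var(x := \<sigma>)) \<phi>) < f p (fsubst (Var(x := \<tau>)) \<phi>) + \<epsilon>)))"

text \<open>Fo f \<phi> e p is F_p applied to \<phi> with its free variables
replaced according to e (e = Var is the identity); F_p(\<phi>) = Fo f \<phi> Var p for a
sentence \<phi>.  The environment makes the clause inf_x \<phi> = inf_c F_p(\<phi>(c))
structurally recursive.\<close>
primrec Fo :: "('p::order \<Rightarrow> ('f, 'r) fm \<Rightarrow> real) \<Rightarrow> ('f, 'r) fm \<Rightarrow> (nat \<Rightarrow> 'f trm) \<Rightarrow> 'p \<Rightarrow> real" where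
  "Fo f (Rel r ts) e p = f p (fsubst e (Rel r ts))"
| "Fo f (Dist s t) e p = f p (fsubst e (Dist s t))"
| "Fo f (Neg \<phi>) e p = 1 - (INF q\<in>{q. q \<le> p}. Fo f \<phi> e q)"
| "Fo f (Half \<phi>) e p = Fo f \<phi> e p / 2"
| "Fo f (Plus \<phi> \<psi>) e p = min (Fo f \<phi> e p + Fo f \<psi> e p) 1"
| "Fo f (Conj \<Phi>) e p = (INF n. Fo f (\<Phi> n) e p)"
| "Fo f (Inf_q x \<phi>) e p = (INF c. Fo f \<phi> (e(x := CC c)) p)"

definition Fp :: "('p::order \<Rightarrow> ('f, 'r) fm \<Rightarrow> real) \<Rightarrow> 'p \<Rightarrow> ('f, 'r) fm \<Rightarrow> real" where
  "Fp f p \<phi> = Fo f \<phi> Var p"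

definition Fw :: "('p::order \<Rightarrow> ('f, 'r) fm \<Rightarrow> real) \<Rightarrow> 'p \<Rightarrow> ('f, 'r) fm \<Rightarrow> real" where
  "Fw f p \<phi> = (SUP q\<in>{q. q \<le> p}. INF q'\<in>{q'. q' \<le> q}. Fp f q' \<phi>)"

definition generic ::
  "('f \<Rightarrow> nat) \<Rightarrow> ('r \<Rightarrow> nat) \<Rightarrow> ('f, 'r) fm set \<Rightarrow> ('p::order \<Rightarrow> ('f, 'r) fm \<Rightarrow> real) \<Rightarrow> 'p set \<Rightarrow> bool" where
  "generic far rar LA f G \<longleftrightarrow>
     G \<noteq> {} \<and>
     (\<forall>p\<in>G. \<forall>q\<in>G. \<exists>r\<in>G. r \<le> p \<and> r \<le> q) \<and>
     (\<forall>p\<in>G. \<forall>q. p \<le> q \<longrightarrow> q \<in> G) \<and>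
     (\<forall>\<phi>\<in>LAs far rar LA. \<forall>r::real. r > 1 \<longrightarrow> (\<exists>p\<in>G. Fp f p \<phi> + Fp f p (Neg \<phi>) < r))"

definition gval :: "('p::order \<Rightarrow> ('f, 'r) fm \<Rightarrow> real) \<Rightarrow> 'p set \<Rightarrow> ('f, 'r) fm \<Rightarrow> real" where
  "gval f G \<phi> = (INF p\<in>G. Fp f p \<phi>)"

end

theory Submission
  imports Defs
begin

lemma LAC_rule:
  assumes "a \<in> LAC far rar LA" "\<And>S. is_fragment far rar True S \<Longrightarrow> a \<in> S \<Longrightarrow> b \<in> S"
  shows "b \<in> LAC far rar LA"
  unfolding LAC_def
proof (rule InterI)
  fix S assume "S \<in> {S. is_fragment far rar True S \<and> countable S \<and> LA \<subseteq> S}"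
  then show "b \<in> S" using assms(1) assms(2) unfolding LAC_def by blast
qed

lemma frag_Neg: "is_fragment far rar True S \<Longrightarrow> Neg \<phi> \<in> S \<Longrightarrow> \<phi> \<in> S"
  unfolding is_fragment_def by (elim conjE) blast

lemma LAC_Neg: "Neg \<phi> \<in> LAC far rar LA \<Longrightarrow> \<phi> \<in> LAC far rar LA"
  by (erule LAC_rule, erule frag_Neg)

lemma frag_Half: "is_fragment far rar True S \<Longrightarrow> Half \<phi> \<in> S \<Longrightarrow> \<phi> \<in> S"
  unfolding is_fragment_def by (elim conjE) blast

lemma LAC_Half: "Half \<phi> \<in> LAC far rar LA \<Longrightarrow> \<phi> \<in> LAC far rar LA"
  by (erule LAC_rule, erule frag_Half)

lemma frag_Plus1: "is_fragment far rar True S \<Longrightarrow> Plus \<phi> \<psi> \<in> S \<Longrightarrow> \<phi> \<in> S"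
  unfolding is_fragment_def by (elim conjE) blast

lemma LAC_Plus1: "Plus \<phi> \<psi> \<in> LAC far rar LA \<Longrightarrow> \<phi> \<in> LAC far rar LA"
  by (erule LAC_rule, erule frag_Plus1)

lemma frag_Plus2: "is_fragment far rar True S \<Longrightarrow> Plus \<phi> \<psi> \<in> S \<Longrightarrow> \<psi> \<in> S"
  unfolding is_fragment_def by (elim conjE) blast

lemma LAC_Plus2: "Plus \<phi> \<psi> \<in> LAC far rar LA \<Longrightarrow> \<psi> \<in> LAC far rar LA"
  by (erule LAC_rule, erule frag_Plus2)

lemma frag_Conj: "is_fragment far rar True S \<Longrightarrow> Conj \<Phi> \<in> S \<Longrightarrow> \<Phi> n \<in> S"
  unfolding is_fragment_def by (elim conjE) blast

lemma LAC_Conj: "Conj \<Phi> \<in> LAC far rar LA \<Longrightarrow> \<Phi> n \<in> LAC far rar LA"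
  by (erule LAC_rule, erule frag_Conj)

lemma frag_Infq: "is_fragment far rar True S \<Longrightarrow> Inf_q x \<phi> \<in> S \<Longrightarrow> \<phi> \<in> S"
  unfolding is_fragment_def by (elim conjE) blast

lemma LAC_Infq: "Inf_q x \<phi> \<in> LAC far rar LA \<Longrightarrow> \<phi> \<in> LAC far rar LA"
  by (erule LAC_rule, erule frag_Infq)

lemma frag_subst: "is_fragment far rar True S \<Longrightarrow> \<phi> \<in> S \<Longrightarrow> fsubst (Var(x := CC c)) \<phi> \<in> S"
proof -
  assume a: "is_fragment far rar True S" and b: "\<phi> \<in> S"
  have H: "\<forall>\<phi>\<in>S. \<forall>x t. twf far True t \<and> tfv t \<inter> fbv \<phi> = {} \<longrightarrow> fsubst (Var(x := t)) \<phi> \<in> S"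
    using a unfolding is_fragment_def by (elim conjE) assumption
  have "twf far True (CC c) \<and> tfv (CC c) \<inter> fbv \<phi> = {}" by simp
  then show ?thesis using H b by blast
qed

lemma LAC_subst: "\<phi> \<in> LAC far rar LA \<Longrightarrow> fsubst (Var(x := CC c)) \<phi> \<in> LAC far rar LA"
  by (erule LAC_rule, erule frag_subst)

lemma tsubst_id: "(\<forall>v\<in>tfv u. s v = Var v) \<Longrightarrow> tsubst s u = u"
  by (induction u) (auto intro: map_idI)

lemma tfv_tsubst: "tfv (tsubst s u) = (\<Union>v\<in>tfv u. tfv (s v))"
  by (induction u) auto

lemma fsubst_Var: "fsubst Var \<psi> = \<psi>"
  by (induction \<psi>) (auto simp: tsubst_id intro: map_idI)

lemma tsubst_comp:
  assumes "\<forall>v. e v = Var v \<or> tfv (e v) = {}" "tfv t = {}"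
  shows "tsubst (Var(x:=t)) (tsubst (e(x:=Var x)) u) = tsubst (e(x:=t)) u"
  using assms
proof (induction u)
  case (Var v)
  then show ?case
  proof (cases "v = x")
    case False
    from Var.prems(1) have "e v = Var v \<or> tfv (e v) = {}" by blast
    then show ?thesis using False by (auto simp: tsubst_id)
  qed simp
qed auto

lemma fsubst_comp:
  assumes "\<forall>v. e v = Var v \<or> tfv (e v) = {}" "tfv t = {}"
  shows "fsubst (Var(x:=t)) (fsubst (e(x:=Var x)) \<psi>) = fsubst (e(x:=t)) \<psi>"
  using assms
proof (induction \<psi> arbitrary: e)
  case (Inf_q y \<psi>)
  show ?case
  proof (cases "y = x")
    case True
    have a: "(Var(x:=t))(x:=Var x) = Var" by (rule ext) simp
    have b: "(e(x:=t))(x:=Var x) = (e(x:=Var x))(x:=Var x)" by simp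
    show ?thesis unfolding True fsubst.simps a b fsubst_Var ..
  next
    case False
    have e': "\<forall>v. (e(y:=Var y)) v = Var v \<or> tfv ((e(y:=Var y)) v) = {}"
      using Inf_q.prems(1) by auto
    have "fsubst ((Var(x := t))(y := Var y)) (fsubst ((e(x := Var x))(y := Var y)) \<psi>)
        = fsubst (Var(x := t)) (fsubst ((e(y := Var y))(x := Var x)) \<psi>)"
    proof -
      have c: "(Var(x:=t))(y:=Var y) = Var(x:=t)" by (rule ext) (simp add: False[symmetric])
      have d: "(e(x:=Var x))(y:=Var y) = (e(y:=Var y))(x:=Var x)" using False by (simp add: fun_upd_twist)
      show ?thesis unfolding c d ..
    qed
    also have "\<dots> = fsubst ((e(y := Var y))(x := t)) \<psi>"
      using Inf_q.IH[OF e' Inf_q.prems(2)] .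
    also have "\<dots> = fsubst ((e(x := t))(y := Var y)) \<psi>"
      using False by (simp add: fun_upd_twist)
    finally show ?thesis by (simp only: fsubst.simps fm.inject)
  qed
qed (auto simp: tsubst_comp)


lemma INF_bounds01:
  fixes g :: "'a \<Rightarrow> real"
  assumes "A \<noteq> {}" "\<And>x. x \<in> A \<Longrightarrow> 0 \<le> g x \<and> g x \<le> 1"
  shows "0 \<le> (INF x\<in>A. g x) \<and> (INF x\<in>A. g x) \<le> 1"
proof
  show "0 \<le> (INF x\<in>A. g x)" using assms by (intro cINF_greatest) auto
  from assms(1) obtain a where a: "a \<in> A" by blast
  have "bdd_below (g ` A)" using assms(2) by (intro bdd_belowI[where m=0]) auto
  then have "(INF x\<in>A. g x) \<le> g a" using a by (rule cINF_lower)
  then show "(INF x\<in>A. g x) \<le> 1" using assms(2)[OF a] by linarith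
qed

lemma INF_mono01:
  fixes g h :: "'a \<Rightarrow> real"
  assumes "A \<noteq> {}" "A \<subseteq> B" "\<And>x. x \<in> B \<Longrightarrow> 0 \<le> g x" "\<And>x. x \<in> A \<Longrightarrow> g x \<le> h x"
  shows "(INF x\<in>B. g x) \<le> (INF x\<in>A. h x)"
proof -
  have "bdd_below (g ` B)" using assms(3) by (intro bdd_belowI[where m=0]) auto
  then show ?thesis using assms by (intro cINF_mono) auto
qed

lemma Fo_props:
  fixes f :: "'p::order \<Rightarrow> ('f, 'r) fm \<Rightarrow> real"
  assumes fb: "\<forall>p. \<forall>\<phi>\<in>LAas far rar LA. 0 \<le> f p \<phi> \<and> f p \<phi> \<le> 1"
    and fm: "\<forall>p q. p \<le> q \<longrightarrow> (\<forall>\<phi>\<in>LAas far rar LA. f p \<phi> \<le> f q \<phi>)"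
  shows "fsubst e \<psi> \<in> LAC far rar LA \<Longrightarrow> (\<forall>v. e v = Var v \<or> tfv (e v) = {})
     \<Longrightarrow> (\<forall>v\<in>ffv \<psi>. tfv (e v) = {})
     \<Longrightarrow> (\<forall>q. 0 \<le> Fo f \<psi> e q \<and> Fo f \<psi> e q \<le> 1) \<and> (\<forall>p q. q \<le> p \<longrightarrow> Fo f \<psi> e q \<le> Fo f \<psi> e p)"
proof (induction \<psi> arbitrary: e)
  case (Rel r ts)
  have "fsubst e (Rel r ts) \<in> LAas far rar LA"
    using Rel.prems unfolding LAas_def LAs_def is_atomic_def by (auto simp: tfv_tsubst)
  then show ?case using fb fm by simp
next
  case (Dist a b)
  have "fsubst e (Dist a b) \<in> LAas far rar LA"
    using Dist.prems unfolding LAas_def LAs_def is_atomic_def by (auto simp: tfv_tsubst)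
  then show ?case using fb fm by simp
next
  case (Neg \<psi>)
  have IH: "(\<forall>q. 0 \<le> Fo f \<psi> e q \<and> Fo f \<psi> e q \<le> 1)"
  proof -
    have L: "fsubst e \<psi> \<in> LAC far rar LA" using Neg.prems(1) by (auto intro: LAC_Neg)
    show ?thesis using Neg.IH[OF L Neg.prems(2)] Neg.prems(3) by simp
  qed
  have B: "0 \<le> (INF q\<in>{q. q \<le> p}. Fo f \<psi> e q) \<and> (INF q\<in>{q. q \<le> p}. Fo f \<psi> e q) \<le> 1" for p
    using IH by (intro INF_bounds01) auto
  have M: "(INF q\<in>{q'. q' \<le> p}. Fo f \<psi> e q) \<le> (INF q\<in>{q'. q' \<le> q0}. Fo f \<psi> e q)" if "q0 \<le> p" for p q0
    using IH that by (intro INF_mono01) (auto intro: order_trans)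
  have C1: "\<forall>q. 0 \<le> Fo f (Neg \<psi>) e q \<and> Fo f (Neg \<psi>) e q \<le> 1"
    using B by simp
  have C2: "\<forall>p q. q \<le> p \<longrightarrow> Fo f (Neg \<psi>) e q \<le> Fo f (Neg \<psi>) e p"
  proof (intro allI impI)
    fix p q :: 'p assume "q \<le> p"
    from M[OF this] show "Fo f (Neg \<psi>) e q \<le> Fo f (Neg \<psi>) e p" by simp
  qed
  show ?case using C1 C2 by blast
next
  case (Half \<psi>)
  have IH: "(\<forall>q. 0 \<le> Fo f \<psi> e q \<and> Fo f \<psi> e q \<le> 1) \<and> (\<forall>p q. q \<le> p \<longrightarrow> Fo f \<psi> e q \<le> Fo f \<psi> e p)"
  proof -
    have L: "fsubst e \<psi> \<in> LAC far rar LA" using Half.prems(1) by (auto intro: LAC_Half)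
    show ?thesis using Half.IH[OF L Half.prems(2)] Half.prems(3) by simp
  qed
  then have a: "\<And>q. 0 \<le> Fo f \<psi> e q \<and> Fo f \<psi> e q \<le> 1"
    and b: "\<And>p q. q \<le> p \<Longrightarrow> Fo f \<psi> e q \<le> Fo f \<psi> e p" by blast+
  have "0 \<le> Fo f (Half \<psi>) e q \<and> Fo f (Half \<psi>) e q \<le> 1" for q using a[of q] by simp
  moreover have "Fo f (Half \<psi>) e q \<le> Fo f (Half \<psi>) e p" if "q \<le> p" for p q using b[OF that] by simp
  ultimately show ?case by blast
next
  case (Plus \<psi>1 \<psi>2)
  have IH1: "(\<forall>q. 0 \<le> Fo f \<psi>1 e q \<and> Fo f \<psi>1 e q \<le> 1) \<and> (\<forall>p q. q \<le> p \<longrightarrow> Fo f \<psi>1 e q \<le> Fo f \<psi>1 e p)"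
  proof -
    have L: "fsubst e \<psi>1 \<in> LAC far rar LA" using Plus.prems(1) by (auto intro: LAC_Plus1)
    show ?thesis using Plus.IH(1)[OF L Plus.prems(2)] Plus.prems(3) by simp
  qed
  have IH2: "(\<forall>q. 0 \<le> Fo f \<psi>2 e q \<and> Fo f \<psi>2 e q \<le> 1) \<and> (\<forall>p q. q \<le> p \<longrightarrow> Fo f \<psi>2 e q \<le> Fo f \<psi>2 e p)"
  proof -
    have L: "fsubst e \<psi>2 \<in> LAC far rar LA" using Plus.prems(1) by (auto intro: LAC_Plus2)
    show ?thesis using Plus.IH(2)[OF L Plus.prems(2)] Plus.prems(3) by simp
  qed
  show ?case using IH1 IH2 by (auto simp: min_def) (smt (verit) IH1 IH2)+
next
  case (Conj \<Phi>)
  have IH: "(\<forall>q. 0 \<le> Fo f (\<Phi> n) e q \<and> Fo f (\<Phi> n) e q \<le> 1) \<and> (\<forall>p q. q \<le> p \<longrightarrow> Fo f (\<Phi> n) e q \<le> Fo f (\<Phi> n) e p)" for n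
  proof -
    have L: "fsubst e (\<Phi> n) \<in> LAC far rar LA" using Conj.prems(1) LAC_Conj[of "\<lambda>n. fsubst e (\<Phi> n)"] by auto
    show ?thesis using Conj.IH[OF _ L Conj.prems(2)] Conj.prems(3) by auto
  qed
  have B: "0 \<le> (INF n. Fo f (\<Phi> n) e q) \<and> (INF n. Fo f (\<Phi> n) e q) \<le> 1" for q
    using IH by (intro INF_bounds01) auto
  have M: "(INF n. Fo f (\<Phi> n) e q) \<le> (INF n. Fo f (\<Phi> n) e p)" if "q \<le> p" for p q
    using IH that by (intro INF_mono01) auto
  show ?case using B M by simp
next
  case (Inf_q x \<psi>)
  let ?e = "\<lambda>c. e(x := CC c)"
  have IH: "(\<forall>q. 0 \<le> Fo f \<psi> (?e c) q \<and> Fo f \<psi> (?e c) q \<le> 1) \<and> (\<forall>p q. q \<le> p \<longrightarrow> Fo f \<psi> (?e c) q \<le> Fo f \<psi> (?e c) p)" for c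
  proof (rule Inf_q.IH)
    have "fsubst (e(x := Var x)) \<psi> \<in> LAC far rar LA" using Inf_q.prems(1) LAC_Infq by simp
    then have "fsubst (Var(x := CC c)) (fsubst (e(x := Var x)) \<psi>) \<in> LAC far rar LA" by (rule LAC_subst)
    then show "fsubst (?e c) \<psi> \<in> LAC far rar LA"
      using fsubst_comp[OF Inf_q.prems(2), of "CC c" x \<psi>] by simp
    show "\<forall>v. (?e c) v = Var v \<or> tfv ((?e c) v) = {}" using Inf_q.prems(2) by auto
    show "\<forall>v\<in>ffv \<psi>. tfv ((?e c) v) = {}" using Inf_q.prems(3) by auto
  qed
  have B: "0 \<le> (INF c. Fo f \<psi> (?e c) q) \<and> (INF c. Fo f \<psi> (?e c) q) \<le> 1" for q
    using IH by (intro INF_bounds01) auto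
  have M: "(INF c. Fo f \<psi> (?e c) q) \<le> (INF c. Fo f \<psi> (?e c) p)" if "q \<le> p" for p q
    using IH that by (intro INF_mono01) auto
  show ?case using B M by simp
qed


theorem lemma2p13:
  fixes far :: "'f \<Rightarrow> nat" and rar :: "'r \<Rightarrow> nat"
    and delta :: "('f, 'r) fm \<Rightarrow> nat \<Rightarrow> real \<Rightarrow> real"
    and LA :: "('f, 'r) fm set"
    and f :: "'p::order \<Rightarrow> ('f, 'r) fm \<Rightarrow> real"
    and G :: "'p set" and \<phi> :: "('f, 'r) fm"
  assumes "countable (UNIV :: 'f set)" and "countable (UNIV :: 'r set)"
    and "is_fragment far rar False LA" and "countable LA"
    and "forcing_property far rar delta LA f"
    and "generic far rar LA f G"
    and "\<phi> \<in> LAs far rar LA"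
  shows "gval f G \<phi> = (INF p\<in>G. Fw f p \<phi>)"
proof -
  have fb: "\<forall>p. \<forall>\<phi>\<in>LAas far rar LA. 0 \<le> f p \<phi> \<and> f p \<phi> \<le> 1"
    using assms(5) unfolding forcing_property_def by (elim conjE) assumption
  have fm: "\<forall>p q. p \<le> q \<longrightarrow> (\<forall>\<phi>\<in>LAas far rar LA. f p \<phi> \<le> f q \<phi>)"
    using assms(5) unfolding forcing_property_def by (elim conjE) assumption
  have phiL: "\<phi> \<in> LAC far rar LA" "ffv \<phi> = {}" using assms(7) unfolding LAs_def by auto
  have P: "(\<forall>q. 0 \<le> Fo f \<phi> Var q \<and> Fo f \<phi> Var q \<le> 1) \<and> (\<forall>p q. q \<le> p \<longrightarrow> Fo f \<phi> Var q \<le> Fo f \<phi> Var p)"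
    using Fo_props[OF fb fm, of Var \<phi>] phiL by (simp add: fsubst_Var)
  define F where "F q = Fp f q \<phi>" for q
  have FB: "0 \<le> F q" "F q \<le> 1" for q using P unfolding F_def Fp_def by auto
  have FM: "q \<le> p \<Longrightarrow> F q \<le> F p" for p q using P unfolding F_def Fp_def by auto
  define W where "W q = (INF q'\<in>{q'. q' \<le> q}. F q')" for q
  have WB: "0 \<le> W q \<and> W q \<le> 1" for q unfolding W_def using FB by (intro INF_bounds01) auto
  have WF: "W q \<le> F q" for q
  proof -
    have "bdd_below (F ` {q'. q' \<le> q})" using FB by (intro bdd_belowI[where m=0]) auto
    then show ?thesis unfolding W_def by (rule cINF_lower) simp
  qed
  have WM: "q \<le> p \<Longrightarrow> W p \<le> W q" for p q
    unfolding W_def using FB by (intro INF_mono01) (auto intro: order_trans)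
  have Fw_eq: "Fw f p \<phi> = (SUP q\<in>{q. q \<le> p}. W q)" for p
    unfolding Fw_def W_def F_def by simp
  have bdd: "bdd_above (W ` {q. q \<le> p})" for p using WB by (intro bdd_aboveI[where M=1]) auto
  have FwU: "q \<le> p \<Longrightarrow> W q \<le> Fw f p \<phi>" for p q
    unfolding Fw_eq by (rule cSUP_upper[OF _ bdd]) simp
  have FwF: "Fw f p \<phi> \<le> F p" for p
    unfolding Fw_eq by (rule cSUP_least) (auto intro: order_trans[OF WF FM])
  have Fw0: "0 \<le> Fw f p \<phi>" for p using FwU[of p p] WB[of p] by auto
  have Gne: "G \<noteq> {}" and Gdir: "\<forall>p\<in>G. \<forall>q\<in>G. \<exists>r\<in>G. r \<le> p \<and> r \<le> q"
    and Ggen: "\<forall>r::real. r > 1 \<longrightarrow> (\<exists>p\<in>G. Fp f p \<phi> + Fp f p (Neg \<phi>) < r)"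
    using assms(6) assms(7) unfolding generic_def by auto
  have gv: "gval f G \<phi> = (INF p\<in>G. F p)" unfolding gval_def F_def by simp
  have bddG: "bdd_below (F ` G)" using FB by (intro bdd_belowI[where m=0]) auto
  show ?thesis
  proof (rule antisym)
    show "(INF p\<in>G. Fw f p \<phi>) \<le> gval f G \<phi>"
      unfolding gv using Gne Fw0 FwF by (intro INF_mono01) auto
    show "gval f G \<phi> \<le> (INF p\<in>G. Fw f p \<phi>)"
    proof (rule cINF_greatest[OF Gne])
      fix p assume pG: "p \<in> G"
      show "gval f G \<phi> \<le> Fw f p \<phi>"
      proof (rule field_le_epsilon)
        fix \<epsilon> :: real assume "0 < \<epsilon>"
        then obtain p0 where p0: "p0 \<in> G" "Fp f p0 \<phi> + Fp f p0 (Neg \<phi>) < 1 + \<epsilon>"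
          using Ggen by (metis less_add_same_cancel1)
        obtain p1 where p1: "p1 \<in> G" "p1 \<le> p" "p1 \<le> p0" using Gdir pG p0(1) by blast
        have neg: "Fp f q (Neg \<phi>) = 1 - W q" for q
          unfolding Fp_def W_def F_def by simp
        have "F p1 + (1 - W p1) \<le> F p0 + (1 - W p0)" using FM[OF p1(3)] WM[OF p1(3)] by simp
        then have "F p1 < W p1 + \<epsilon>" using p0(2) unfolding neg F_def by simp
        moreover have "gval f G \<phi> \<le> F p1" unfolding gv by (rule cINF_lower[OF bddG p1(1)])
        moreover have "W p1 \<le> Fw f p \<phi>" by (rule FwU[OF p1(2)])
        ultimately show "gval f G \<phi> \<le> Fw f p \<phi> + \<epsilon>" by linarith
      qed
    qed
  qed
qed

end
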